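(* Let $M$ be an rfCGS with finite state set $St_M$, let $A$ be a coalition and $s_A=(s_{a_1},\ldots,s_{a_n})$ a natural resource-bounded strategy with recall for $A$ of complexity $k=\mathrm{compl}(s_A)$, where every action has an associated cost and each agent $a$ starts with a fixed non-refillable amount of resource $res(a)=r_a\in\mathbb{N}$. Let the goal be a temporal formula of the form $\varphi\,\mathbf{U}\,\psi$. Then, to decide whether $s_A$ enforces this objective from a state $st\in St_M$, it is sufficient to consider the tree unfolding of the executions prescribed by $s_A$ up to depth $L=|St_M|\cdot 2^{2k^2}\cdot\prod_{a\in A}(r_a+1)$.
   Context: A resource-bounded fuzzy concurrent game structure (rfCGS) is a tuple $(\mathrm{Ag},\mathrm{Ap},\{\mathrm{Act}_a\}_{a\in\mathrm{Ag}},St,st_I,\ell,d,t,res,consume)$: finite nonempty sets of agents, atomic propositions and actions; finite states $St$ with initial $st_I$; weight function $\ell:St\times\mathrm{Ap}\to[0,1]$; availability $d:\mathrm{Ag}\times St\to2^{\mathrm{Act}}$ (nonempty); transition function $t(st,\vec c)$ on joint available actions; non-refillable resource budgets $res:\mathrm{Ag}\to\mathbb{N}$; action costs $consume:\mathrm{Ag}\times\mathrm{Act}\to\mathbb{N}$, each executed action of agent $a$ consuming $consume(a,\alpha)$ from its remaining resource. A natural strategy with recall for agent $a$ is an ordered list of pairs $(r,\alpha)$ where $r$ is a regular expression (concatenation, union, Kleene star) over propositional formulas over $\mathrm{Ap}$ and $\alpha$ is an action available in the last state of every history consistent with $r$; a history $h=q_0\ldots q_n$ is consistent with $r$ if some word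 $w$ in the language of $r$ has $|w|=|h|$ and $q_j\models w[j]$ for all $j$. On a history, the agent plays the action of the first rule whose regular expression the history is consistent with. Its complexity is the total size of the regular expressions; a collective strategy's complexity is the sum over its members. The strategy enforces $\varphi\mathbf{U}\psi$ from $st$ if all paths from $st$ consistent with $s_A$ (other agents acting arbitrarily, within resource constraints) satisfy $\varphi\mathbf{U}\psi$. *)

theory Defs
  imports Complex_Main
begin

record ('ag, 'ap, 'act, 's) rfcgs =
  Agt     :: "'ag set"
  Ap      :: "'ap set"
  Act     :: "'act set"
  St      :: "'s set"
  st_I    :: "'s"
  lab     :: "'s \<Rightarrow> 'ap \<Rightarrow> real"
  avail   :: "'ag \<Rightarrow> 's \<Rightarrow> 'act set"
  trans   :: "'s \<Rightarrow> ('ag \<Rightarrow> 'act) \<Rightarrow> 's"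
  res     :: "'ag \<Rightarrow> nat"
  consume :: "'ag \<Rightarrow> 'act \<Rightarrow> nat"

text \<open>Joint actions are total functions on agents; only their values on Agt matter.\<close>
definition joint_avail :: "('ag, 'ap, 'act, 's) rfcgs \<Rightarrow> 's \<Rightarrow> ('ag \<Rightarrow> 'act) \<Rightarrow> bool" where
  "joint_avail M s c \<longleftrightarrow> (\<forall>a\<in>Agt M. c a \<in> avail M a s)"

definition is_rfcgs :: "('ag, 'ap, 'act, 's) rfcgs \<Rightarrow> bool" where
  "is_rfcgs M \<longleftrightarrow>
     finite (Agt M) \<and> Agt M \<noteq> {} \<and>
     finite (Ap M) \<and> Ap M \<noteq> {} \<and>
     finite (Act M) \<and> Act M \<noteq> {} \<and>
     finite (St M) \<and> st_I M \<in> St M \<and>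
     (\<forall>s\<in>St M. \<forall>p\<in>Ap M. 0 \<le> lab M s p \<and> lab M s p \<le> 1) \<and>
     (\<forall>a\<in>Agt M. \<forall>s\<in>St M. avail M a s \<subseteq> Act M \<and> avail M a s \<noteq> {}) \<and>
     (\<forall>s\<in>St M. \<forall>c. joint_avail M s c \<longrightarrow> trans M s c \<in> St M) \<and>
     (\<forall>s\<in>St M. \<forall>c c'. (\<forall>a\<in>Agt M. c a = c' a) \<longrightarrow> trans M s c = trans M s c')"

datatype 'ap pform = PTrue | PAtom 'ap | PNot "'ap pform"
  | PAnd "'ap pform" "'ap pform" | POr "'ap pform" "'ap pform"

fun psize :: "'ap pform \<Rightarrow> nat" where
  "psize PTrue = 1"
| "psize (PAtom p) = 1"
| "psize (PNot f) = 1 + psize f"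
| "psize (PAnd f g) = 1 + psize f + psize g"
| "psize (POr f g) = 1 + psize f + psize g"

datatype 'f regex = RAtom 'f | RCat "'f regex" "'f regex"
  | RUnion "'f regex" "'f regex" | RStar "'f regex"

definition lstar :: "'a list set \<Rightarrow> 'a list set" where
  "lstar L = {concat ws | ws. set ws \<subseteq> L}"

fun lang :: "'f regex \<Rightarrow> 'f list set" where
  "lang (RAtom f) = {[f]}"
| "lang (RCat r1 r2) = {u @ v | u v. u \<in> lang r1 \<and> v \<in> lang r2}"
| "lang (RUnion r1 r2) = lang r1 \<union> lang r2"
| "lang (RStar r) = lstar (lang r)"

fun rsize :: "'ap pform regex \<Rightarrow> nat" where
  "rsize (RAtom f) = psize f"
| "rsize (RCat r1 r2) = 1 + rsize r1 + rsize r2"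
| "rsize (RUnion r1 r2) = 1 + rsize r1 + rsize r2"
| "rsize (RStar r) = 1 + rsize r"

text \<open>The parameter sat is the satisfaction relation between states and propositional formulas
  (the statement is proved for an arbitrary such relation).\<close>
definition consistent :: "('s \<Rightarrow> 'ap pform \<Rightarrow> bool) \<Rightarrow> 'ap pform regex \<Rightarrow> 's list \<Rightarrow> bool" where
  "consistent sat r h \<longleftrightarrow>
     (\<exists>w\<in>lang r. length w = length h \<and> (\<forall>j<length h. sat (h ! j) (w ! j)))"

type_synonym ('ap, 'act) nstrat = "('ap pform regex \<times> 'act) list"

fun nact :: "('s \<Rightarrow> 'ap pform \<Rightarrow> bool) \<Rightarrow> ('ap, 'act) nstrat \<Rightarrow> 's list \<Rightarrow> 'act option" where
  "nact sat [] h = None"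
| "nact sat ((r, \<alpha>) # rs) h = (if consistent sat r h then Some \<alpha> else nact sat rs h)"

definition is_nstrat ::
  "('ag, 'ap, 'act, 's) rfcgs \<Rightarrow> ('s \<Rightarrow> 'ap pform \<Rightarrow> bool) \<Rightarrow> 'ag \<Rightarrow> ('ap, 'act) nstrat \<Rightarrow> bool" where
  "is_nstrat M sat a rs \<longleftrightarrow>
     (\<forall>(r, \<alpha>) \<in> set rs. \<forall>h. h \<noteq> [] \<and> set h \<subseteq> St M \<and> consistent sat r h \<longrightarrow> \<alpha> \<in> avail M a (last h)) \<and>
     (\<forall>h. h \<noteq> [] \<and> set h \<subseteq> St M \<longrightarrow> (\<exists>(r, \<alpha>) \<in> set rs. consistent sat r h))"

definition compl :: "('ap, 'act) nstrat \<Rightarrow> nat" where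
  "compl rs = (\<Sum>(r, \<alpha>) \<leftarrow> rs. rsize r)"

definition coal_compl :: "'ag set \<Rightarrow> ('ag \<Rightarrow> ('ap, 'act) nstrat) \<Rightarrow> nat" where
  "coal_compl A sA = (\<Sum>a\<in>A. compl (sA a))"

definition outcome ::
  "('ag, 'ap, 'act, 's) rfcgs \<Rightarrow> ('s \<Rightarrow> 'ap pform \<Rightarrow> bool) \<Rightarrow> 'ag set \<Rightarrow> ('ag \<Rightarrow> ('ap, 'act) nstrat)
     \<Rightarrow> 's \<Rightarrow> (nat \<Rightarrow> 's) \<Rightarrow> (nat \<Rightarrow> 'ag \<Rightarrow> 'act) \<Rightarrow> bool" where
  "outcome M sat A sA st \<pi> c \<longleftrightarrow>
     \<pi> 0 = st \<and>
     (\<forall>i. joint_avail M (\<pi> i) (c i) \<and> \<pi> (Suc i) = trans M (\<pi> i) (c i)) \<and>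
     (\<forall>i. \<forall>a\<in>A. nact sat (sA a) (map \<pi> [0..<Suc i]) = Some (c i a)) \<and>
     (\<forall>i. \<forall>a\<in>A. (\<Sum>j\<le>i. consume M a (c j a)) \<le> res M a)"

definition until_path :: "'s set \<Rightarrow> 's set \<Rightarrow> (nat \<Rightarrow> 's) \<Rightarrow> bool" where
  "until_path Phi Psi \<pi> \<longleftrightarrow> (\<exists>i. \<pi> i \<in> Psi \<and> (\<forall>j<i. \<pi> j \<in> Phi))"

definition until_within :: "nat \<Rightarrow> 's set \<Rightarrow> 's set \<Rightarrow> (nat \<Rightarrow> 's) \<Rightarrow> bool" where
  "until_within L Phi Psi \<pi> \<longleftrightarrow> (\<exists>i\<le>L. \<pi> i \<in> Psi \<and> (\<forall>j<i. \<pi> j \<in> Phi))"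

definition enforces_until ::
  "('ag, 'ap, 'act, 's) rfcgs \<Rightarrow> ('s \<Rightarrow> 'ap pform \<Rightarrow> bool) \<Rightarrow> 'ag set \<Rightarrow> ('ag \<Rightarrow> ('ap, 'act) nstrat)
     \<Rightarrow> 's \<Rightarrow> 's set \<Rightarrow> 's set \<Rightarrow> bool" where
  "enforces_until M sat A sA st Phi Psi \<longleftrightarrow>
     (\<forall>\<pi> c. outcome M sat A sA st \<pi> c \<longrightarrow> until_path Phi Psi \<pi>)"

text \<open>Checking the tree unfolding up to depth L: every outcome satisfies the until
  objective at some position \<le> L.\<close>
definition enforces_until_depth ::
  "nat \<Rightarrow> ('ag, 'ap, 'act, 's) rfcgs \<Rightarrow> ('s \<Rightarrow> 'ap pform \<Rightarrow> bool) \<Rightarrow> 'ag set \<Rightarrow> ('ag \<Rightarrow> ('ap, 'act) nstrat)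
     \<Rightarrow> 's \<Rightarrow> 's set \<Rightarrow> 's set \<Rightarrow> bool" where
  "enforces_until_depth L M sat A sA st Phi Psi \<longleftrightarrow>
     (\<forall>\<pi> c. outcome M sat A sA st \<pi> c \<longrightarrow> until_within L Phi Psi \<pi>)"

end

theory Submission
  imports Defs "HOL-Library.FuncSet"
begin

inductive_set lst :: "'a list set \<Rightarrow> 'a list set" for L where
  lst_nil: "[] \<in> lst L"
| lst_app: "u \<in> L \<Longrightarrow> v \<in> lst L \<Longrightarrow> u @ v \<in> lst L"

lemma lstar_lst: "lstar L = lst L"
proof
  show "lstar L \<subseteq> lst L"
  proof
    fix x assume "x \<in> lstar L"
    then obtain ws where x: "x = concat ws" and ws: "set ws \<subseteq> L" unfolding lstar_def by blast
    have "concat ws \<in> lst L" using ws by (induction ws) (auto intro: lst.intros)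
    then show "x \<in> lst L" using x by simp
  qed
next
  show "lst L \<subseteq> lstar L"
  proof
    fix x assume "x \<in> lst L"
    then show "x \<in> lstar L"
    proof induction
      case lst_nil
      then show ?case unfolding lstar_def by (auto intro: exI[of _ "[]"])
    next
      case (lst_app u v)
      then obtain ws where "v = concat ws" "set ws \<subseteq> L" unfolding lstar_def by blast
      then show ?case using lst_app unfolding lstar_def by (auto intro!: exI[of _ "u # ws"])
    qed
  qed
qed

definition lift :: "('s \<Rightarrow> 'f \<Rightarrow> bool) \<Rightarrow> 'f list set \<Rightarrow> 's list set" where
  "lift sat L = {h. \<exists>w\<in>L. list_all2 (\<lambda>f x. sat x f) w h}"

lemma lift_lst: "lift sat (lst L) = lst (lift sat L)"
proof
  show "lift sat (lst L) \<subseteq> lst (lift sat L)"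
  proof
    fix h assume "h \<in> lift sat (lst L)"
    then obtain w where w: "w \<in> lst L" "list_all2 (\<lambda>f x. sat x f) w h" unfolding lift_def by blast
    from w show "h \<in> lst (lift sat L)"
    proof (induction arbitrary: h)
      case lst_nil then show ?case by (auto intro: lst.intros)
    next
      case (lst_app u v)
      then obtain h1 h2 where "h = h1 @ h2" "list_all2 (\<lambda>f x. sat x f) u h1" "list_all2 (\<lambda>f x. sat x f) v h2"
        by (auto simp: list_all2_append1)
      then show ?case using lst_app by (auto intro!: lst.intros simp: lift_def)
    qed
  qed
next
  show "lst (lift sat L) \<subseteq> lift sat (lst L)"
  proof
    fix h assume "h \<in> lst (lift sat L)"
    then show "h \<in> lift sat (lst L)"
    proof induction
      case lst_nil then show ?case by (auto simp: lift_def intro: lst.intros)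
    next
      case (lst_app u v)
      then obtain w1 w2 where "w1 \<in> L" "list_all2 (\<lambda>f x. sat x f) w1 u" "w2 \<in> lst L" "list_all2 (\<lambda>f x. sat x f) w2 v"
        by (auto simp: lift_def)
      then show ?case by (auto simp: lift_def intro!: bexI[of _ "w1 @ w2"] lst.intros list_all2_appendI)
    qed
  qed
qed

fun sem :: "('s \<Rightarrow> 'f \<Rightarrow> bool) \<Rightarrow> 'f regex \<Rightarrow> 's list set" where
  "sem sat (RAtom f) = {[x] | x. sat x f}"
| "sem sat (RCat a b) = {u @ v | u v. u \<in> sem sat a \<and> v \<in> sem sat b}"
| "sem sat (RUnion a b) = sem sat a \<union> sem sat b"
| "sem sat (RStar r) = lst (sem sat r)"

lemma lift_sem: "lift sat (lang r) = sem sat r"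
proof (induction r)
  case (RAtom f)
  then show ?case by (auto simp: lift_def list_all2_Cons1)
next
  case (RCat r1 r2)
  show ?case
  proof
    show "lift sat (lang (RCat r1 r2)) \<subseteq> sem sat (RCat r1 r2)"
    proof
      fix h assume "h \<in> lift sat (lang (RCat r1 r2))"
      then obtain u v us vs where "h = us @ vs" "u \<in> lang r1" "v \<in> lang r2"
        "list_all2 (\<lambda>f x. sat x f) u us" "list_all2 (\<lambda>f x. sat x f) v vs"
        by (auto simp: lift_def list_all2_append1)
      then have "us \<in> sem sat r1" "vs \<in> sem sat r2" using RCat by (auto simp: lift_def)
      then show "h \<in> sem sat (RCat r1 r2)" using \<open>h = us @ vs\<close> by auto
    qed
  next
    show "sem sat (RCat r1 r2) \<subseteq> lift sat (lang (RCat r1 r2))"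
    proof
      fix h assume "h \<in> sem sat (RCat r1 r2)"
      then obtain u v where "h = u @ v" "u \<in> lift sat (lang r1)" "v \<in> lift sat (lang r2)" using RCat by auto
      then show "h \<in> lift sat (lang (RCat r1 r2))"
        by (auto simp: lift_def intro: list_all2_appendI)
    qed
  qed
next
  case (RUnion r1 r2)
  then show ?case by (auto simp: lift_def)
next
  case (RStar r)
  then show ?case by (simp add: lstar_lst lift_lst)
qed

lemma consistent_sem: "consistent sat r h \<longleftrightarrow> h \<in> sem sat r"
proof -
  have "consistent sat r h \<longleftrightarrow> h \<in> lift sat (lang r)"
    unfolding consistent_def lift_def by (auto simp: list_all2_conv_all_nth)
  then show ?thesis by (simp add: lift_sem)
qed


fun nullable :: "'f regex \<Rightarrow> bool" where
  "nullable (RAtom f) = False"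
| "nullable (RCat a b) = (nullable a \<and> nullable b)"
| "nullable (RUnion a b) = (nullable a \<or> nullable b)"
| "nullable (RStar r) = True"

fun sems :: "('s \<Rightarrow> 'f \<Rightarrow> bool) \<Rightarrow> 'f regex list \<Rightarrow> 's list set" where
  "sems sat [] = {[]}"
| "sems sat (t # ts) = {u @ v | u v. u \<in> sem sat t \<and> v \<in> sems sat ts}"

fun pd :: "('s \<Rightarrow> 'f \<Rightarrow> bool) \<Rightarrow> 's \<Rightarrow> 'f regex \<Rightarrow> 'f regex list set" where
  "pd sat x (RAtom f) = (if sat x f then {[]} else {})"
| "pd sat x (RCat a b) = (\<lambda>w. w @ [b]) ` pd sat x a \<union> (if nullable a then pd sat x b else {})"
| "pd sat x (RUnion a b) = pd sat x a \<union> pd sat x b"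
| "pd sat x (RStar r) = (\<lambda>w. w @ [RStar r]) ` pd sat x r"

fun pdl :: "('s \<Rightarrow> 'f \<Rightarrow> bool) \<Rightarrow> 's \<Rightarrow> 'f regex list \<Rightarrow> 'f regex list set" where
  "pdl sat x [] = {}"
| "pdl sat x (t # ts) = (\<lambda>w. w @ ts) ` pd sat x t \<union> (if nullable t then pdl sat x ts else {})"

fun PP :: "'f regex \<Rightarrow> 'f regex list set" where
  "PP (RAtom f) = {[]}"
| "PP (RCat a b) = (\<lambda>w. w @ [b]) ` PP a \<union> PP b"
| "PP (RUnion a b) = PP a \<union> PP b"
| "PP (RStar r) = (\<lambda>w. w @ [RStar r]) ` PP r"

definition stp :: "('s \<Rightarrow> 'f \<Rightarrow> bool) \<Rightarrow> 's \<Rightarrow> 'f regex list set \<Rightarrow> 'f regex list set" where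
  "stp sat x S = (\<Union>w\<in>S. pdl sat x w)"

definition DD :: "('s \<Rightarrow> 'f \<Rightarrow> bool) \<Rightarrow> 'f regex \<Rightarrow> 's list \<Rightarrow> 'f regex list set" where
  "DD sat r h = fold (stp sat) h {[r]}"

definition acc :: "('s \<Rightarrow> 'f \<Rightarrow> bool) \<Rightarrow> 'f regex list set \<Rightarrow> 's list \<Rightarrow> bool" where
  "acc sat S h \<longleftrightarrow> (\<exists>w\<in>S. h \<in> sems sat w)"

lemma nullable_sem: "[] \<in> sem sat t \<longleftrightarrow> nullable t"
  by (induction t) (auto intro: lst_nil)

lemma sems_append: "sems sat (w @ ts) = {u @ v | u v. u \<in> sems sat w \<and> v \<in> sems sat ts}"
proof (induction w)
  case Nil then show ?case by simp
next
  case (Cons t w)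
  show ?case
  proof (intro set_eqI iffI)
    fix h assume "h \<in> sems sat ((t # w) @ ts)"
    then obtain a b where "h = a @ b" "a \<in> sem sat t" "b \<in> sems sat (w @ ts)" by auto
    then obtain b1 b2 where "b = b1 @ b2" "b1 \<in> sems sat w" "b2 \<in> sems sat ts" using Cons by blast
    then have "a @ b1 \<in> sems sat (t # w)" using \<open>a \<in> sem sat t\<close> by auto
    moreover have "h = (a @ b1) @ b2" using \<open>h = a @ b\<close> \<open>b = b1 @ b2\<close> by simp
    ultimately show "h \<in> {u @ v |u v. u \<in> sems sat (t # w) \<and> v \<in> sems sat ts}"
      using \<open>b2 \<in> sems sat ts\<close> by blast
  next
    fix h assume "h \<in> {u @ v |u v. u \<in> sems sat (t # w) \<and> v \<in> sems sat ts}"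
    then obtain u v where "h = u @ v" "u \<in> sems sat (t # w)" "v \<in> sems sat ts" by blast
    then obtain a b where "u = a @ b" "a \<in> sem sat t" "b \<in> sems sat w" by auto
    then have "b @ v \<in> sems sat (w @ ts)" using Cons \<open>v \<in> sems sat ts\<close> by blast
    moreover have "h = a @ (b @ v)" using \<open>h = u @ v\<close> \<open>u = a @ b\<close> by simp
    ultimately show "h \<in> sems sat ((t # w) @ ts)"
      using \<open>a \<in> sem sat t\<close> by auto
  qed
qed

lemma semCatI: "u \<in> sem sat a \<Longrightarrow> v \<in> sem sat b \<Longrightarrow> u @ v \<in> sem sat (RCat a b)"
  by (simp only: sem.simps) blast

lemma semsConsI: "u \<in> sem sat a \<Longrightarrow> v \<in> sems sat b \<Longrightarrow> u @ v \<in> sems sat (a # b)"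
  by (simp only: sems.simps) blast

lemma sems_single: "sems sat [t] = sem sat t" by auto

lemma sems_appendI: "u \<in> sems sat w \<Longrightarrow> v \<in> sems sat ts \<Longrightarrow> u @ v \<in> sems sat (w @ ts)"
  by (simp only: sems_append) blast

lemma sems_appendD: "h \<in> sems sat (w @ ts) \<Longrightarrow> \<exists>u v. h = u @ v \<and> u \<in> sems sat w \<and> v \<in> sems sat ts"
  by (simp only: sems_append) blast

lemma semCatD: "h \<in> sem sat (RCat a b) \<Longrightarrow> \<exists>u v. h = u @ v \<and> u \<in> sem sat a \<and> v \<in> sem sat b"
  by (simp only: sem.simps) blast

lemma semsConsD: "h \<in> sems sat (a # b) \<Longrightarrow> \<exists>u v. h = u @ v \<and> u \<in> sem sat a \<and> v \<in> sems sat b"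
  by (simp only: sems.simps) blast

lemma lst_cons_dest:
  assumes "z \<in> lst L" "z = x # g"
  shows "\<exists>u v. x # u \<in> L \<and> v \<in> lst L \<and> g = u @ v"
  using assms
proof (induction arbitrary: g)
  case lst_nil then show ?case by simp
next
  case (lst_app u v)
  show ?case
  proof (cases u)
    case Nil then show ?thesis using lst_app by auto
  next
    case (Cons y u')
    then show ?thesis using lst_app by auto
  qed
qed

lemma pd_correct: "x # g \<in> sem sat t \<longleftrightarrow> (\<exists>w\<in>pd sat x t. g \<in> sems sat w)"
proof (induction t arbitrary: g)
  case (RAtom f) then show ?case by auto
next
  case (RCat a b)
  show ?case
  proof
    assume "x # g \<in> sem sat (RCat a b)"
    then obtain u v where uv: "x # g = u @ v" "u \<in> sem sat a" "v \<in> sem sat b" using semCatD by blast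
    show "\<exists>w\<in>pd sat x (RCat a b). g \<in> sems sat w"
    proof (cases u)
      case Nil
      then have "nullable a" using uv nullable_sem by metis
      moreover have "x # g \<in> sem sat b" using uv Nil by simp
      ultimately show ?thesis using RCat by auto
    next
      case (Cons y u')
      then have "x # u' \<in> sem sat a" "g = u' @ v" using uv by auto
      then obtain w where "w \<in> pd sat x a" "u' \<in> sems sat w" using RCat by blast
      then have "g \<in> sems sat (w @ [b])" using \<open>g = u' @ v\<close> uv sems_appendI[of u' sat w v "[b]"] by simp
      then show ?thesis using \<open>w \<in> pd sat x a\<close> by auto
    qed
  next
    assume "\<exists>w\<in>pd sat x (RCat a b). g \<in> sems sat w"
    then obtain w where w: "w \<in> pd sat x (RCat a b)" "g \<in> sems sat w" by blast
    show "x # g \<in> sem sat (RCat a b)"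
    proof (cases "w \<in> (\<lambda>w. w @ [b]) ` pd sat x a")
      case True
      then obtain w' where "w' \<in> pd sat x a" "w = w' @ [b]" by auto
      then obtain u v where "g = u @ v" "u \<in> sems sat w'" "v \<in> sem sat b" using w sems_appendD[of g sat w' "[b]"] by auto
      then have "x # u \<in> sem sat a" using RCat \<open>w' \<in> pd sat x a\<close> by blast
      then have "(x # u) @ v \<in> sem sat (RCat a b)" using \<open>v \<in> sem sat b\<close> by (rule semCatI)
      then show ?thesis using \<open>g = u @ v\<close> by (simp only: append_Cons)
    next
      case False
      then have "nullable a" "w \<in> pd sat x b" using w by (auto split: if_splits)
      then have "x # g \<in> sem sat b" using RCat w by blast
      moreover have "[] \<in> sem sat a" using \<open>nullable a\<close> nullable_sem by metis
      ultimately have "[] @ (x # g) \<in> sem sat (RCat a b)" using semCatI[of "[]" sat a "x # g" b] by blast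
      then show ?thesis by (simp only: append_Nil)
    qed
  qed
next
  case (RUnion a b) then show ?case by auto
next
  case (RStar r)
  show ?case
  proof
    assume "x # g \<in> sem sat (RStar r)"
    then have "x # g \<in> lst (sem sat r)" by simp
    then have "\<exists>u v. x # u \<in> sem sat r \<and> v \<in> lst (sem sat r) \<and> g = u @ v"
      by (rule lst_cons_dest) (rule refl)
    then obtain u v where "x # u \<in> sem sat r" "v \<in> lst (sem sat r)" "g = u @ v" by blast
    then obtain w where "w \<in> pd sat x r" "u \<in> sems sat w" using RStar by blast
    then have "g \<in> sems sat (w @ [RStar r])" using \<open>g = u @ v\<close> \<open>v \<in> lst (sem sat r)\<close>
      sems_appendI[of u sat w v "[RStar r]"] by simp
    then show "\<exists>w\<in>pd sat x (RStar r). g \<in> sems sat w" using \<open>w \<in> pd sat x r\<close> by auto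
  next
    assume "\<exists>w\<in>pd sat x (RStar r). g \<in> sems sat w"
    then obtain w' where "w' \<in> pd sat x r" "g \<in> sems sat (w' @ [RStar r])" by auto
    then obtain u v where "g = u @ v" "u \<in> sems sat w'" "v \<in> lst (sem sat r)" using sems_appendD[of g sat w' "[RStar r]"] by auto
    then have "x # u \<in> sem sat r" using RStar \<open>w' \<in> pd sat x r\<close> by blast
    then have "(x # u) @ v \<in> lst (sem sat r)" using \<open>v \<in> lst (sem sat r)\<close> by (rule lst_app)
    then show "x # g \<in> sem sat (RStar r)" using \<open>g = u @ v\<close> by simp
  qed
qed

lemma pdl_correct: "x # g \<in> sems sat ts \<longleftrightarrow> (\<exists>w\<in>pdl sat x ts. g \<in> sems sat w)"
proof (induction ts arbitrary: g)
  case Nil then show ?case by simp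
next
  case (Cons t ts)
  show ?case
  proof
    assume "x # g \<in> sems sat (t # ts)"
    then obtain u v where uv: "x # g = u @ v" "u \<in> sem sat t" "v \<in> sems sat ts" using semsConsD by blast
    show "\<exists>w\<in>pdl sat x (t # ts). g \<in> sems sat w"
    proof (cases u)
      case Nil
      then have "nullable t" using uv nullable_sem by metis
      then show ?thesis using Cons uv Nil by auto
    next
      case (Cons y u')
      then have "x # u' \<in> sem sat t" "g = u' @ v" using uv by auto
      then obtain w where "w \<in> pd sat x t" "u' \<in> sems sat w" using pd_correct[of x u' sat t] by blast
      then have "g \<in> sems sat (w @ ts)" using \<open>g = u' @ v\<close> uv sems_appendI[of u' sat w v ts] by simp
      then show ?thesis using \<open>w \<in> pd sat x t\<close> by auto
    qed
  next
    assume "\<exists>w\<in>pdl sat x (t # ts). g \<in> sems sat w"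
    then obtain w where w: "w \<in> pdl sat x (t # ts)" "g \<in> sems sat w" by blast
    show "x # g \<in> sems sat (t # ts)"
    proof (cases "w \<in> (\<lambda>w. w @ ts) ` pd sat x t")
      case True
      then obtain w' where "w' \<in> pd sat x t" "w = w' @ ts" by auto
      then obtain u v where "g = u @ v" "u \<in> sems sat w'" "v \<in> sems sat ts" using w sems_appendD[of g sat w' ts] by auto
      then have "x # u \<in> sem sat t" using pd_correct[of x u sat t] \<open>w' \<in> pd sat x t\<close> by blast
      then have "(x # u) @ v \<in> sems sat (t # ts)" using \<open>v \<in> sems sat ts\<close> by (rule semsConsI)
      then show ?thesis using \<open>g = u @ v\<close> by (simp only: append_Cons)
    next
      case False
      then have "nullable t" "w \<in> pdl sat x ts" using w by (auto split: if_splits)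
      then have "x # g \<in> sems sat ts" using Cons w by blast
      moreover have "[] \<in> sem sat t" using \<open>nullable t\<close> nullable_sem by metis
      ultimately have "[] @ (x # g) \<in> sems sat (t # ts)" using semsConsI[of "[]" sat t "x # g" ts] by blast
      then show ?thesis by (simp only: append_Nil)
    qed
  qed
qed

lemma acc_step: "acc sat S (x # g) \<longleftrightarrow> acc sat (stp sat x S) g"
  unfolding acc_def stp_def by (auto simp: pdl_correct)

lemma acc_fold: "acc sat (fold (stp sat) h S) g \<longleftrightarrow> acc sat S (h @ g)"
  by (induction h arbitrary: S) (auto simp: acc_step)

lemma consistent_DD: "consistent sat r h \<longleftrightarrow> acc sat (DD sat r h) []"
  unfolding DD_def acc_fold consistent_sem by (simp add: acc_def)

lemma DD_snoc: "DD sat r (h @ [x]) = stp sat x (DD sat r h)"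
  unfolding DD_def by simp

lemma pd_PP: "pd sat x r \<subseteq> PP r"
  by (induction r) auto

lemma pdl_append: "pdl sat x (u @ v) = (\<lambda>w. w @ v) ` pdl sat x u \<union> (if list_all nullable u then pdl sat x v else {})"
  by (induction u) (auto simp: image_Un image_image)

lemma pdl_PP: "w \<in> PP r \<Longrightarrow> pdl sat x w \<subseteq> PP r"
proof (induction r arbitrary: w)
  case (RAtom f) then show ?case by simp
next
  case (RCat a b)
  show ?case
  proof (cases "w \<in> PP b")
    case True then show ?thesis using RCat.IH(2)[OF True] by auto
  next
    case False
    then obtain u where u: "u \<in> PP a" "w = u @ [b]" using RCat by auto
    have "pdl sat x [b] \<subseteq> PP b" using pd_PP[of sat x b] by auto
    then show ?thesis using u RCat.IH(1)[OF u(1)] by (auto simp: pdl_append)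
  qed
next
  case (RUnion a b) then show ?case by auto
next
  case (RStar r)
  then obtain u where u: "u \<in> PP r" "w = u @ [RStar r]" by auto
  have "pdl sat x [RStar r] \<subseteq> PP (RStar r)" using pd_PP[of sat x r] by auto
  then show ?case using u RStar.IH[OF u(1)] by (auto simp: pdl_append)
qed

lemma DD_PP: "h \<noteq> [] \<Longrightarrow> DD sat r h \<subseteq> PP r"
proof (induction h rule: rev_induct)
  case Nil then show ?case by simp
next
  case (snoc x h)
  show ?case
  proof (cases "h = []")
    case True
    then show ?thesis using pd_PP[of sat x r] by (auto simp: DD_def stp_def)
  next
    case False
    then show ?thesis using snoc pdl_PP by (fastforce simp: DD_snoc stp_def)
  qed
qed

lemma psize_pos: "psize f \<ge> 1" by (cases f) auto

lemma PP_finite: "finite (PP r)" by (induction r) auto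

lemma PP_card: "card (PP r) \<le> rsize r"
proof (induction r)
  case (RAtom f) then show ?case using psize_pos[of f] by simp
next
  case (RCat a b)
  have "card (PP (RCat a b)) \<le> card ((\<lambda>w. w @ [b]) ` PP a) + card (PP b)" by (simp add: card_Un_le)
  also have "\<dots> \<le> card (PP a) + card (PP b)" using card_image_le[OF PP_finite[of a]] by simp
  finally show ?case using RCat by simp
next
  case (RUnion a b)
  have "card (PP (RUnion a b)) \<le> card (PP a) + card (PP b)" by (simp add: card_Un_le)
  then show ?case using RUnion by simp
next
  case (RStar r)
  then show ?case using card_image_le[OF PP_finite[of r], of "\<lambda>w. w @ [RStar r]"] by simp
qed

lemma nact_cong: "(\<forall>(r, \<alpha>)\<in>set rs. consistent sat r h1 = consistent sat r h2) \<Longrightarrow> nact sat rs h1 = nact sat rs h2"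
  by (induction rs) auto


lemma compl_nth: "compl rs = (\<Sum>i<length rs. rsize (fst (rs ! i)))"
  by (induction rs) (auto simp: compl_def sum.lessThan_Suc_shift simp del: sum.lessThan_Suc split: prod.splits)

lemma pump:
  fixes M :: "('ag, 'ap, 'act, 's) rfcgs"
    and sat :: "'s \<Rightarrow> 'ap pform \<Rightarrow> bool"
    and A :: "'ag set"
    and sA :: "'ag \<Rightarrow> ('ap, 'act) nstrat"
    and st :: 's and Phi Psi :: "'s set"
  assumes rf: "is_rfcgs M" and AAgt: "A \<subseteq> Agt M" and st: "st \<in> St M"
    and kdef: "k = coal_compl A sA"
    and Ldef: "L = card (St M) * 2 ^ (2 * k ^ 2) * (\<Prod>a\<in>A. res M a + 1)"
    and out: "outcome M sat A sA st \<pi> c"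
    and noPsi: "\<forall>m\<le>L. \<pi> m \<notin> Psi"
  shows "\<exists>\<pi>' c'. outcome M sat A sA st \<pi>' c' \<and> \<not> until_path Phi Psi \<pi>'"
proof -
  have finA: "finite A" using rf AAgt unfolding is_rfcgs_def by (meson finite_subset)
  have finSt: "finite (St M)" using rf unfolding is_rfcgs_def by blast
  from out have o0: "\<pi> 0 = st" and o1: "\<And>i. joint_avail M (\<pi> i) (c i)"
    and o2: "\<And>i. \<pi> (Suc i) = trans M (\<pi> i) (c i)"
    and o3: "\<And>i a. a \<in> A \<Longrightarrow> nact sat (sA a) (map \<pi> [0..<Suc i]) = Some (c i a)"
    and o4: "\<And>i a. a \<in> A \<Longrightarrow> (\<Sum>j\<le>i. consume M a (c j a)) \<le> res M a"
    unfolding outcome_def by auto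
  have inSt: "\<pi> n \<in> St M" for n
  proof (induction n)
    case 0 then show ?case using o0 st by simp
  next
    case (Suc n) then show ?case using rf o1 o2 unfolding is_rfcgs_def by metis
  qed
  define hist where "hist n = map \<pi> [0..<Suc n]" for n
  define used where "used a n = (\<Sum>j<n. consume M a (c j a))" for a n
  have hist_Suc: "hist (Suc n) = hist n @ [\<pi> (Suc n)]" for n by (simp add: hist_def)
  have used_le: "used a n \<le> res M a" if "a \<in> A" for a n
  proof (cases n)
    case 0 then show ?thesis by (simp add: used_def)
  next
    case (Suc m) then show ?thesis using o4[OF that, of m] by (simp add: used_def lessThan_Suc_atMost)
  qed
  define I where "I = Sigma A (\<lambda>a. {..<length (sA a)})"
  define R where "R a i = fst (sA a ! i)" for a i
  define conf where "conf n = (\<pi> n, restrict (\<lambda>(a,i). DD sat (R a i) (hist n)) I, restrict (\<lambda>a. used a n) A)" for n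
  define FF where "FF = PiE I (\<lambda>(a,i). Pow (PP (R a i)))"
  define GG where "GG = PiE A (\<lambda>a. {..res M a})"
  have finI: "finite I" unfolding I_def using finA by auto
  have conf_in: "conf n \<in> St M \<times> FF \<times> GG" for n
  proof -
    have "hist n \<noteq> []" by (simp add: hist_def)
    then have "restrict (\<lambda>(a,i). DD sat (R a i) (hist n)) I \<in> FF"
      unfolding FF_def using DD_PP by (auto simp: PiE_iff)
    moreover have "restrict (\<lambda>a. used a n) A \<in> GG" unfolding GG_def using used_le by (auto simp: PiE_iff)
    ultimately show ?thesis using inSt unfolding conf_def by auto
  qed
  have sumk: "(\<Sum>(a,i)\<in>I. rsize (R a i)) = k"
  proof -
    have "(\<Sum>(a,i)\<in>I. rsize (R a i)) = (\<Sum>a\<in>A. \<Sum>i\<in>{..<length (sA a)}. rsize (R a i))"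
      unfolding I_def using finA by (subst sum.Sigma) auto
    also have "\<dots> = (\<Sum>a\<in>A. compl (sA a))" by (simp add: compl_nth R_def)
    finally show ?thesis using kdef unfolding coal_compl_def by simp
  qed
  have cardFF: "card FF \<le> 2 ^ (2 * k ^ 2)"
  proof -
    have "card FF = (\<Prod>j\<in>I. card ((\<lambda>(a,i). Pow (PP (R a i))) j))" unfolding FF_def using finI by (rule card_PiE)
    also have "\<dots> = (\<Prod>j\<in>I. 2 ^ ((\<lambda>(a,i). card (PP (R a i))) j))"
      by (rule prod.cong) (auto simp: card_Pow PP_finite)
    also have "\<dots> = 2 ^ (\<Sum>j\<in>I. (\<lambda>(a,i). card (PP (R a i))) j)" by (simp add: power_sum)
    also have "\<dots> \<le> 2 ^ (\<Sum>j\<in>I. (\<lambda>(a,i). rsize (R a i)) j)"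
      by (intro power_increasing sum_mono) (auto simp: PP_card)
    also have "\<dots> = 2 ^ k" using sumk by simp
    also have "(2::nat) ^ k \<le> 2 ^ (2 * k ^ 2)"
    proof (intro power_increasing)
      show "k \<le> 2 * k ^ 2" using le_square[of k] by (simp add: power2_eq_square)
    qed auto
    finally show ?thesis .
  qed
  have cardGG: "card GG = (\<Prod>a\<in>A. res M a + 1)" unfolding GG_def using finA by (simp add: card_PiE)
  have finFF: "finite FF" unfolding FF_def using finI by (auto intro!: finite_PiE simp: PP_finite)
  have finGG: "finite GG" unfolding GG_def using finA by (auto intro!: finite_PiE)
  have cardP: "card (St M \<times> FF \<times> GG) \<le> L"
  proof -
    have "card (St M \<times> FF \<times> GG) = card (St M) * card FF * card GG" by (simp add: card_cartesian_product)
    also have "\<dots> \<le> card (St M) * 2 ^ (2 * k ^ 2) * card GG" using cardFF by (intro mult_le_mono) auto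
    finally show ?thesis using Ldef cardGG by simp
  qed
  have "conf ` {..L} \<subseteq> St M \<times> FF \<times> GG" using conf_in by blast
  moreover have "finite (St M \<times> FF \<times> GG)" using finSt finFF finGG by simp
  ultimately have "card (conf ` {..L}) \<le> L"
    using card_mono[of "St M \<times> FF \<times> GG" "conf ` {..L}"] cardP by linarith
  then have "\<not> inj_on conf {..L}" using card_image[of conf "{..L}"] by auto
  then obtain x y where xy: "x \<le> L" "y \<le> L" "x \<noteq> y" "conf x = conf y" unfolding inj_on_def by auto
  define j1 where "j1 = min x y"
  define j2 where "j2 = max x y"
  have j12: "j1 < j2" "j2 \<le> L" "conf j1 = conf j2" using xy unfolding j1_def j2_def by (auto simp: min_def max_def)
  have eqpi: "\<pi> j1 = \<pi> j2" using j12(3) unfolding conf_def by simp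
  have eqused: "used a j1 = used a j2" if "a \<in> A" for a
  proof -
    have "restrict (\<lambda>a. used a j1) A a = restrict (\<lambda>a. used a j2) A a" using j12(3) unfolding conf_def by simp
    then show ?thesis using that by simp
  qed
  have eqDD: "DD sat (R a i) (hist j1) = DD sat (R a i) (hist j2)" if "a \<in> A" "i < length (sA a)" for a i
  proof -
    have ai: "(a, i) \<in> I" using that unfolding I_def by simp
    have "restrict (\<lambda>(a,i). DD sat (R a i) (hist j1)) I (a,i) = restrict (\<lambda>(a,i). DD sat (R a i) (hist j2)) I (a,i)"
      using j12(3) unfolding conf_def by simp
    then show ?thesis using ai by simp
  qed
  define p where "p = j2 - j1"
  have p0: "p > 0" using j12 unfolding p_def by simp
  define f where "f n = (if n < j2 then n else j1 + (n - j1) mod p)" for n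
  have f_lt: "f n < j2" for n
  proof (cases "n < j2")
    case False
    have "(n - j1) mod p < p" using p0 by simp
    then have "j1 + (n - j1) mod p < j2" using j12 unfolding p_def by linarith
    then show ?thesis using False unfolding f_def by simp
  qed (simp add: f_def)
  have f0: "f 0 = 0" using j12 unfolding f_def by simp
  have f_step: "f (Suc n) = Suc (f n) \<or> (Suc (f n) = j2 \<and> f (Suc n) = j1)" for n
  proof (cases "Suc n < j2")
    case True then show ?thesis unfolding f_def by simp
  next
    case False
    show ?thesis
    proof (cases "Suc n = j2")
      case True
      then have "f (Suc n) = j1" unfolding f_def p_def by simp
      moreover have "f n = n" using True unfolding f_def by simp
      ultimately show ?thesis using True by simp
    next
      case False2: False
      then have nj: "n \<ge> j2" using False by simp
      define m where "m = n - j1"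
      have sm: "Suc n - j1 = Suc m" using nj j12 unfolding m_def by simp
      have fn: "f n = j1 + m mod p" using nj unfolding f_def m_def by simp
      have fs: "f (Suc n) = j1 + Suc m mod p" using nj sm unfolding f_def by simp
      have "m mod p < p" using p0 by simp
      then show ?thesis using fn fs mod_Suc[of m p] j12 unfolding p_def
        by (auto split: if_splits)
    qed
  qed
  define \<pi>' where "\<pi>' n = \<pi> (f n)" for n
  define c' where "c' n = c (f n)" for n
  have step_ok: "\<pi>' (Suc n) = trans M (\<pi>' n) (c' n)" for n
    using f_step[of n] o2[of "f n"] eqpi o2 unfolding \<pi>'_def c'_def by auto
  have histDD: "DD sat r (map \<pi>' [0..<Suc n]) = DD sat r (hist (f n))"
    if hr: "DD sat r (hist j1) = DD sat r (hist j2)" for r n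
  proof (induction n)
    case 0 then show ?case using f0 unfolding \<pi>'_def hist_def by simp
  next
    case (Suc n)
    have "DD sat r (map \<pi>' [0..<Suc (Suc n)]) = stp sat (\<pi> (f (Suc n))) (DD sat r (hist (f n)))"
    proof -
      have "map \<pi>' [0..<Suc (Suc n)] = map \<pi>' [0..<Suc n] @ [\<pi> (f (Suc n))]" by (simp add: \<pi>'_def)
      then have "DD sat r (map \<pi>' [0..<Suc (Suc n)]) = stp sat (\<pi> (f (Suc n))) (DD sat r (map \<pi>' [0..<Suc n]))"
        by (simp only: DD_snoc)
      then show ?thesis using Suc by simp
    qed
    also have "\<dots> = DD sat r (hist (f (Suc n)))"
      using f_step[of n]
    proof
      assume "f (Suc n) = Suc (f n)"
      then show ?thesis by (simp add: hist_Suc DD_snoc)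
    next
      assume h: "Suc (f n) = j2 \<and> f (Suc n) = j1"
      then have "hist j2 = hist (f n) @ [\<pi> j1]" using hist_Suc[of "f n"] eqpi by simp
      then show ?thesis using h hr by (simp add: DD_snoc)
    qed
    finally show ?case .
  qed
  have nact_ok: "nact sat (sA a) (map \<pi>' [0..<Suc n]) = Some (c' n a)" if "a \<in> A" for a n
  proof -
    have "nact sat (sA a) (map \<pi>' [0..<Suc n]) = nact sat (sA a) (hist (f n))"
    proof (rule nact_cong, clarify)
      fix r \<alpha> assume "(r, \<alpha>) \<in> set (sA a)"
      then obtain i where i: "i < length (sA a)" "sA a ! i = (r, \<alpha>)" by (auto simp: in_set_conv_nth)
      then have "R a i = r" unfolding R_def by simp
      then have "DD sat r (hist j1) = DD sat r (hist j2)" using eqDD[OF that i(1)] by simp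
      then show "consistent sat r (map \<pi>' [0..<Suc n]) = consistent sat r (hist (f n))"
        using histDD by (simp add: consistent_DD)
    qed
    also have "\<dots> = Some (c' n a)" using o3[OF that] unfolding hist_def c'_def by simp
    finally show ?thesis .
  qed
  have used_ok: "(\<Sum>j<n. consume M a (c' j a)) = used a (f n)" if "a \<in> A" for a n
  proof (induction n)
    case 0 then show ?case using f0 by (simp add: used_def)
  next
    case (Suc n)
    have "(\<Sum>j<Suc n. consume M a (c' j a)) = used a (f n) + consume M a (c (f n) a)"
      using Suc by (simp add: c'_def)
    also have "\<dots> = used a (Suc (f n))" by (simp add: used_def)
    also have "\<dots> = used a (f (Suc n))" using f_step[of n] eqused[OF that] by auto
    finally show ?case .
  qed
  have "outcome M sat A sA st \<pi>' c'"
    unfolding outcome_def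
  proof (intro conjI allI ballI)
    show "\<pi>' 0 = st" using f0 o0 unfolding \<pi>'_def by simp
  next
    fix i show "joint_avail M (\<pi>' i) (c' i)"
      using o1 unfolding \<pi>'_def c'_def by simp
  next
    fix i show "\<pi>' (Suc i) = trans M (\<pi>' i) (c' i)" by (rule step_ok)
  next
    fix i a assume "a \<in> A" then show "nact sat (sA a) (map \<pi>' [0..<Suc i]) = Some (c' i a)" by (rule nact_ok)
  next
    fix i a assume a: "a \<in> A"
    have "(\<Sum>j\<le>i. consume M a (c' j a)) = (\<Sum>j<Suc i. consume M a (c' j a))" by (simp add: lessThan_Suc_atMost)
    also have "\<dots> = used a (f (Suc i))" using used_ok[OF a] by simp
    finally show "(\<Sum>j\<le>i. consume M a (c' j a)) \<le> res M a" using used_le[OF a] by simp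
  qed
  moreover have "\<not> until_path Phi Psi \<pi>'"
  proof
    assume "until_path Phi Psi \<pi>'"
    then obtain i where "\<pi> (f i) \<in> Psi" unfolding until_path_def \<pi>'_def by blast
    moreover have "f i \<le> L" using f_lt[of i] j12 by simp
    ultimately show False using noPsi by blast
  qed
  ultimately show ?thesis by blast
qed


theorem proposition2:
  fixes M :: "('ag, 'ap, 'act, 's) rfcgs"
    and sat :: "'s \<Rightarrow> 'ap pform \<Rightarrow> bool"
    and A :: "'ag set"
    and sA :: "'ag \<Rightarrow> ('ap, 'act) nstrat"
    and st :: 's and Phi Psi :: "'s set"
  assumes "is_rfcgs M"
    and "A \<subseteq> Agt M"
    and "\<forall>a\<in>A. is_nstrat M sat a (sA a)"
    and "st \<in> St M"
    and "k = coal_compl A sA"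
    and "L = card (St M) * 2 ^ (2 * k ^ 2) * (\<Prod>a\<in>A. res M a + 1)"
  shows "enforces_until M sat A sA st Phi Psi \<longleftrightarrow> enforces_until_depth L M sat A sA st Phi Psi"
proof
  assume E: "enforces_until M sat A sA st Phi Psi"
  show "enforces_until_depth L M sat A sA st Phi Psi"
    unfolding enforces_until_depth_def
  proof (intro allI impI)
    fix \<pi> c assume out: "outcome M sat A sA st \<pi> c"
    show "until_within L Phi Psi \<pi>"
    proof (rule ccontr)
      assume nw: "\<not> until_within L Phi Psi \<pi>"
      have "until_path Phi Psi \<pi>" using E out unfolding enforces_until_def by blast
      then obtain i0 where i0: "\<pi> i0 \<in> Psi" "\<forall>j<i0. \<pi> j \<in> Phi" unfolding until_path_def by blast
      have noPsi: "\<forall>m\<le>L. \<pi> m \<notin> Psi"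
      proof (intro allI impI notI)
        fix m assume m: "m \<le> L" "\<pi> m \<in> Psi"
        define i where "i = min m i0"
        have "\<pi> i \<in> Psi" using m i0 unfolding i_def by (simp add: min_def)
        moreover have "\<forall>j<i. \<pi> j \<in> Phi" using i0 unfolding i_def by simp
        moreover have "i \<le> L" using m unfolding i_def by simp
        ultimately show False using nw unfolding until_within_def by blast
      qed
      obtain \<pi>' c' where "outcome M sat A sA st \<pi>' c'" "\<not> until_path Phi Psi \<pi>'"
        using pump[OF assms(1,2,4,5,6) out noPsi] by blast
      then show False using E unfolding enforces_until_def by blast
    qed
  qed
next
  assume "enforces_until_depth L M sat A sA st Phi Psi"
  then show "enforces_until M sat A sA st Phi Psi"
    unfolding enforces_until_depth_def enforces_until_def until_within_def until_path_def by blast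
qed

end
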